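(* Every simple probabilistic automaton is leaktight.
   Context: Fix a finite alphabet $A$. A probabilistic automaton is $\mathcal{A}=(Q,q_0,\Delta,F)$ with $Q$ finite, $\Delta:Q\times A\to\mathcal{D}(Q)$. For $a\in A$ let $M_a(s,t)=\Delta(s,a)(t)$, for $u=a_0\cdots a_{n-1}$ let $M_u=M_{a_0}\cdots M_{a_{n-1}}$ (identity for the empty word), and $\mathbb{P}_{\mathcal{A}}(s\xrightarrow{u}t)=M_u(s,t)$, $\mathbb{P}_{\mathcal{A}}(s\xrightarrow{u}T)=\sum_{t\in T}\mathbb{P}_{\mathcal{A}}(s\xrightarrow{u}t)$. For an infinite word $w\in A^\omega$, $w_{<k}$ denotes its prefix of length $k$. For $w\in A^\omega$ and $p\in Q$, the process induced by $w$ from $p$ is simple if there exist $\lambda>0$ and sequences $(A_k)_{k\in\mathbb{N}},(B_k)_{k\in\mathbb{N}}$ of subsets of $Q$ such that: for all $k$, $A_k\cap B_k=\emptyset$ and $A_k\cup B_k=Q$; for all $k$ and all $q\in A_k$, $\mathbb{P}_{\mathcal{A}}(p\xrightarrow{w_{<k}}q)\ge\lambda$; and $\lim_{n\to\infty}\mathbb{P}_{\mathcal{A}}(p\xrightarrow{w_{<n}}B_n)=0$. $\mathcal{A}$ is simple if for every $w\in A^\omega$ and every $p\in Q$ the process induced by $w$ from $p$ is simple. A nonnegative $Q\times Q$ matrix $M$ is idempotent if $M(s,t)>0\iff M^2(s,t)>0$ for all $s,t$; a finite word $u$ is idempotent if $M_u$ is. A leak is a sequence $(u_n)$ of idempotent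 words such that $M_{u_n}$ converges to an idempotent matrix $M$ and there exist states $r,q$, both recurrent in the Markov chain with transition matrix $M$, with $\lim_n\mathbb{P}_{\mathcal{A}}(r\xrightarrow{u_n}q)=0$ and $\mathbb{P}_{\mathcal{A}}(r\xrightarrow{u_n}q)>0$ for all $n$. $\mathcal{A}$ is leaktight if it has no leak. *)

theory Defs
  imports "HOL-Probability.Probability"
begin

text \<open>The initial state
  and accepting states play no role in the notions of simplicity and leaktightness.\<close>

type_synonym 'q mat = "'q \<Rightarrow> 'q \<Rightarrow> real"

definition mat_mult :: "'q::finite mat \<Rightarrow> 'q mat \<Rightarrow> 'q mat" where
  "mat_mult M N = (\<lambda>s t. \<Sum>r\<in>UNIV. M s r * N r t)"

definition mat_id :: "'q mat" where
  "mat_id = (\<lambda>s t. if s = t then 1 else 0)"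

definition letter_mat :: "('q \<Rightarrow> 'a \<Rightarrow> 'q pmf) \<Rightarrow> 'a \<Rightarrow> 'q mat" where
  "letter_mat Delta a = (\<lambda>s t. pmf (Delta s a) t)"

fun word_mat :: "('q::finite \<Rightarrow> 'a \<Rightarrow> 'q pmf) \<Rightarrow> 'a list \<Rightarrow> 'q mat" where
  "word_mat Delta [] = mat_id"
| "word_mat Delta (a # u) = mat_mult (letter_mat Delta a) (word_mat Delta u)"

definition prefix_word :: "(nat \<Rightarrow> 'a) \<Rightarrow> nat \<Rightarrow> 'a list" where
  "prefix_word w k = map w [0..<k]"

definition simple_process :: "('q::finite \<Rightarrow> 'a \<Rightarrow> 'q pmf) \<Rightarrow> (nat \<Rightarrow> 'a) \<Rightarrow> 'q \<Rightarrow> bool" where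
  "simple_process Delta w p \<longleftrightarrow>
     (\<exists>lam::real. lam > 0 \<and> (\<exists>A B :: nat \<Rightarrow> 'q set.
        (\<forall>k. A k \<inter> B k = {} \<and> A k \<union> B k = UNIV) \<and>
        (\<forall>k. \<forall>q\<in>A k. word_mat Delta (prefix_word w k) p q \<ge> lam) \<and>
        (\<lambda>n. \<Sum>t\<in>B n. word_mat Delta (prefix_word w n) p t) \<longlonglongrightarrow> 0))"

definition simple_pa :: "('q::finite \<Rightarrow> 'a \<Rightarrow> 'q pmf) \<Rightarrow> bool" where
  "simple_pa Delta \<longleftrightarrow> (\<forall>w p. simple_process Delta w p)"

definition idempotent_mat :: "'q::finite mat \<Rightarrow> bool" where
  "idempotent_mat M \<longleftrightarrow> (\<forall>s t. M s t > 0 \<longleftrightarrow> mat_mult M M s t > 0)"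

definition mc_reach :: "'q mat \<Rightarrow> ('q \<times> 'q) set" where
  "mc_reach M = {(s, t). M s t > 0}\<^sup>*"

definition recurrent :: "'q mat \<Rightarrow> 'q \<Rightarrow> bool" where
  "recurrent M s \<longleftrightarrow> (\<forall>t. (s, t) \<in> mc_reach M \<longrightarrow> (t, s) \<in> mc_reach M)"

definition is_leak :: "('q::finite \<Rightarrow> 'a \<Rightarrow> 'q pmf) \<Rightarrow> (nat \<Rightarrow> 'a list) \<Rightarrow> bool" where
  "is_leak Delta u \<longleftrightarrow>
     (\<forall>n. idempotent_mat (word_mat Delta (u n))) \<and>
     (\<exists>M. (\<forall>s t. (\<lambda>n. word_mat Delta (u n) s t) \<longlonglongrightarrow> M s t) \<and>
          idempotent_mat M \<and>
          (\<exists>r q. recurrent M r \<and> recurrent M q \<and>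
             (\<lambda>n. word_mat Delta (u n) r q) \<longlonglongrightarrow> 0 \<and>
             (\<forall>n. word_mat Delta (u n) r q > 0)))"

definition leaktight :: "('q::finite \<Rightarrow> 'a \<Rightarrow> 'q pmf) \<Rightarrow> bool" where
  "leaktight Delta \<longleftrightarrow> \<not> (\<exists>u. is_leak Delta u)"

end

theory Submission
  imports Defs
begin

lemma mat_mult_assoc:
  "mat_mult (mat_mult A B) C = mat_mult A (mat_mult (B::'q::finite mat) C)"
  unfolding mat_mult_def
  apply (rule ext, rule ext)
  apply (simp add: sum_distrib_left sum_distrib_right mult.assoc)
  by (rule sum.swap)

lemma mat_id_left: "mat_mult mat_id A = (A::'q::finite mat)"
proof (rule ext, rule ext)
  fix s t
  have "mat_mult mat_id A s t = (\<Sum>r\<in>UNIV. if s = r then A r t else 0)"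
    unfolding mat_mult_def mat_id_def by (intro sum.cong) auto
  then show "mat_mult mat_id A s t = A s t" by simp
qed

lemma mat_id_right: "mat_mult A mat_id = (A::'q::finite mat)"
proof (rule ext, rule ext)
  fix s t
  have "mat_mult A mat_id s t = (\<Sum>r\<in>UNIV. if r = t then A s r else 0)"
    unfolding mat_mult_def mat_id_def by (intro sum.cong) auto
  then show "mat_mult A mat_id s t = A s t" by simp
qed

context fixes Delta :: "'q::finite \<Rightarrow> 'a::finite \<Rightarrow> 'q pmf" begin

abbreviation W where "W \<equiv> word_mat Delta"

lemma W_append: "W (u @ v) = mat_mult (W u) (W v)"
  by (induction u) (auto simp: mat_id_left mat_mult_assoc)

lemma W_append_e: "W (u @ v) s t = (\<Sum>x\<in>UNIV. W u s x * W v x t)"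
  by (simp add: W_append mat_mult_def)

lemma W_snoc: "W (u @ [a]) s t = (\<Sum>x\<in>UNIV. W u s x * pmf (Delta x a) t)"
  by (simp add: W_append_e mat_id_right letter_mat_def)

lemma W_Cons: "W (a # u) s t = (\<Sum>x\<in>UNIV. pmf (Delta s a) x * W u x t)"
  by (simp add: mat_mult_def letter_mat_def)

lemma W_nonneg: "W u s t \<ge> 0"
  by (induction u arbitrary: s) (auto simp: mat_id_def mat_mult_def letter_mat_def intro!: sum_nonneg)

lemma W_rowsum: "(\<Sum>t\<in>UNIV. W u s t) = 1"
proof (induction u arbitrary: s)
  case Nil then show ?case by (simp add: mat_id_def)
next
  case (Cons a u)
  have "(\<Sum>t\<in>UNIV. W (a#u) s t) = (\<Sum>x\<in>UNIV. pmf (Delta s a) x * (\<Sum>t\<in>UNIV. W u x t))"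
    unfolding W_Cons sum_distrib_left by (rule sum.swap)
  also have "\<dots> = (\<Sum>x\<in>UNIV. pmf (Delta s a) x)" using Cons by simp
  also have "\<dots> = 1" by (rule sum_pmf_eq_1) auto
  finally show ?case .
qed

lemma W_le1: "W u s t \<le> 1"
proof -
  have "W u s t \<le> (\<Sum>t\<in>UNIV. W u s t)"
    by (rule member_le_sum) (auto simp: W_nonneg)
  then show ?thesis by (simp add: W_rowsum)
qed

lemma pmin_ex: "\<exists>pm>0. \<forall>s a t. pmf (Delta s a) t > 0 \<longrightarrow> pmf (Delta s a) t \<ge> pm"
proof -
  let ?S = "{x. \<exists>s a t. x = pmf (Delta s a) t \<and> x > 0}"
  have "?S \<subseteq> (\<lambda>(s,a,t). pmf (Delta s a) t) ` UNIV" by (fastforce simp: image_iff)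
  then have fin: "finite ?S" by (rule finite_subset) auto
  show ?thesis
  proof (cases "?S = {}")
    case True then show ?thesis by (intro exI[of _ 1]) auto
  next
    case False
    have "Min ?S \<in> ?S" using fin False by (rule Min_in)
    then have "Min ?S > 0" by auto
    moreover have "\<forall>s a t. pmf (Delta s a) t > 0 \<longrightarrow> pmf (Delta s a) t \<ge> Min ?S"
      using fin by (auto intro!: Min_le)
    ultimately show ?thesis by blast
  qed
qed


lemma split_sum: "(\<Sum>x\<in>UNIV. f x) = (\<Sum>x\<in>C. f x) + (\<Sum>x\<in>-C. f (x::'q))"
proof -
  have "(\<Sum>x\<in>C \<union> -C. f x) = (\<Sum>x\<in>C. f x) + (\<Sum>x\<in>-C. f x)"
    by (rule sum.union_disjoint) auto
  then show ?thesis by (simp add: Compl_partition)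
qed

lemma triple_sum:
  "(\<Sum>t\<in>UNIV. (\<Sum>s\<in>A. Pz s * W (take i v) s t) * (\<Sum>d\<in>B. W (drop i v) t d))
   = (\<Sum>s\<in>A. Pz s * (\<Sum>d\<in>B. W v s d))"
proof -
  have "(\<Sum>s\<in>A. Pz s * (\<Sum>d\<in>B. W v s d))
      = (\<Sum>s\<in>A. Pz s * (\<Sum>d\<in>B. \<Sum>t\<in>UNIV. W (take i v) s t * W (drop i v) t d))"
    using W_append_e[of "take i v" "drop i v"] by simp
  also have "\<dots> = (\<Sum>s\<in>A. \<Sum>d\<in>B. \<Sum>t\<in>UNIV. Pz s * W (take i v) s t * W (drop i v) t d)"
    by (simp add: sum_distrib_left mult.assoc)
  also have "\<dots> = (\<Sum>s\<in>A. \<Sum>t\<in>UNIV. \<Sum>d\<in>B. Pz s * W (take i v) s t * W (drop i v) t d)"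
    by (rule sum.cong[OF refl], rule sum.swap)
  also have "\<dots> = (\<Sum>t\<in>UNIV. \<Sum>s\<in>A. \<Sum>d\<in>B. Pz s * W (take i v) s t * W (drop i v) t d)"
    by (rule sum.swap)
  also have "\<dots> = (\<Sum>t\<in>UNIV. (\<Sum>s\<in>A. Pz s * W (take i v) s t) * (\<Sum>d\<in>B. W (drop i v) t d))"
    apply (simp add: sum_distrib_left sum_distrib_right mult.assoc)
    apply (rule sum.cong[OF refl])
    by (rule sum.swap)
  finally show ?thesis by simp
qed

lemma pos_sum_ex: assumes "(\<Sum>x\<in>UNIV. f x * g x) > (0::real)" "\<forall>x. f x \<ge> 0" "\<forall>x. g x \<ge> 0"
  shows "\<exists>x. f x > 0 \<and> g x > 0"
proof (rule ccontr)
  assume "\<not> ?thesis"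
  then have "\<forall>x. f x * g x = 0" using assms(2,3) by (metis less_eq_real_def mult_eq_0_iff)
  then have "(\<Sum>x\<in>UNIV. f x * g x) = 0" by (intro sum.neutral) simp
  then show False using assms(1) by simp
qed

lemma crossing:
  fixes Pz :: "'q \<Rightarrow> real"
  assumes Pznn: "\<forall>s. Pz s \<ge> 0" and Pzle: "\<forall>s. Pz s \<le> 1"
  and rC: "r \<in> C" and qC: "q \<notin> C" and pos: "W v r q > 0"
  and pm: "pm > 0" "pm \<le> 1" "\<forall>s a t. pmf (Delta s a) t > 0 \<longrightarrow> pmf (Delta s a) t \<ge> pm"
  and eps: "\<epsilon> > 0" "Pz r \<ge> \<epsilon>"
  and ell: "(\<Sum>s\<in>C. \<Sum>d\<in>-C. W v s d) \<le> pm*\<epsilon>/2"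
  shows "\<exists>i\<le>length v. \<exists>t. pm*\<epsilon> \<le> (\<Sum>s\<in>UNIV. Pz s * W (take i v) s t) \<and>
           (\<Sum>s\<in>UNIV. Pz s * W (take i v) s t) < \<epsilon> + 2 * (\<Sum>s\<in>-C. Pz s * (\<Sum>c\<in>C. W v s c))"
proof -
  define \<gamma> where "\<gamma> i t = (\<Sum>s\<in>C. Pz s * W (take i v) s t)" for i t
  define \<delta> where "\<delta> i t = (\<Sum>s\<in>-C. Pz s * W (take i v) s t)" for i t
  define R where "R i t \<longleftrightarrow> W (drop i v) t q > 0" for i t
  define L where "L = (\<Sum>s\<in>C. \<Sum>d\<in>-C. W v s d)"
  define \<iota> where "\<iota> = (\<Sum>s\<in>-C. Pz s * (\<Sum>c\<in>C. W v s c))"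
  have \<gamma>nn: "\<gamma> i t \<ge> 0" for i t unfolding \<gamma>_def using Pznn by (auto intro!: sum_nonneg simp: W_nonneg)
  have \<delta>nn: "\<delta> i t \<ge> 0" for i t unfolding \<delta>_def using Pznn by (auto intro!: sum_nonneg simp: W_nonneg)
  have Lnn: "L \<ge> 0" unfolding L_def by (auto intro!: sum_nonneg simp: W_nonneg)
  have step: "\<exists>x. R (Suc i) x \<and> \<gamma> (Suc i) x \<ge> pm * \<gamma> i t" if "i < length v" "R i t" for i t
  proof -
    have dr: "drop i v = v ! i # drop (Suc i) v" using that(1) by (simp add: Cons_nth_drop_Suc)
    have "(\<Sum>x\<in>UNIV. pmf (Delta t (v!i)) x * W (drop (Suc i) v) x q) > 0"
      using that(2) unfolding R_def dr W_Cons .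
    then obtain x where x1: "pmf (Delta t (v!i)) x > 0" and x2: "W (drop (Suc i) v) x q > 0"
      using pos_sum_ex[of "\<lambda>x. pmf (Delta t (v!i)) x" "\<lambda>x. W (drop (Suc i) v) x q"]
      by (auto simp: W_nonneg)
    have tk: "take (Suc i) v = take i v @ [v ! i]" using that(1) by (simp add: take_Suc_conv_app_nth)
    have "W (take (Suc i) v) s x \<ge> W (take i v) s t * pmf (Delta t (v!i)) x" for s
    proof -
      have "W (take i v) s t * pmf (Delta t (v!i)) x \<le> (\<Sum>y\<in>UNIV. W (take i v) s y * pmf (Delta y (v!i)) x)"
        by (rule member_le_sum[where f="\<lambda>y. W (take i v) s y * pmf (Delta y (v!i)) x"]) (auto simp: W_nonneg)
      then show ?thesis by (simp add: tk W_snoc)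
    qed
    then have "\<gamma> (Suc i) x \<ge> (\<Sum>s\<in>C. Pz s * (W (take i v) s t * pmf (Delta t (v!i)) x))"
      unfolding \<gamma>_def using Pznn by (intro sum_mono mult_left_mono) auto
    also have "(\<Sum>s\<in>C. Pz s * (W (take i v) s t * pmf (Delta t (v!i)) x)) = \<gamma> i t * pmf (Delta t (v!i)) x"
      unfolding \<gamma>_def by (simp add: sum_distrib_right mult.assoc)
    also have "\<gamma> i t * pmf (Delta t (v!i)) x \<ge> \<gamma> i t * pm"
      using pm x1 \<gamma>nn by (intro mult_left_mono) auto
    finally show ?thesis using x2 R_def by (auto simp: mult.commute)
  qed
  have claim: "(\<exists>i'\<le>i. \<exists>t. pm*\<epsilon> \<le> \<gamma> i' t \<and> \<gamma> i' t < \<epsilon> \<and> R i' t) \<or> (\<exists>t. R i t \<and> \<gamma> i t \<ge> \<epsilon>)"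
    if "i \<le> length v" for i
    using that
  proof (induction i)
    case 0
    have "\<gamma> 0 r = Pz r"
    proof -
      have "\<gamma> 0 r = (\<Sum>s\<in>C. if s = r then Pz s else 0)"
        unfolding \<gamma>_def by (intro sum.cong) (auto simp: mat_id_def)
      then show ?thesis using rC by simp
    qed
    then show ?case using pos eps unfolding R_def by auto
  next
    case (Suc i)
    then have IH: "(\<exists>i'\<le>i. \<exists>t. pm*\<epsilon> \<le> \<gamma> i' t \<and> \<gamma> i' t < \<epsilon> \<and> R i' t) \<or> (\<exists>t. R i t \<and> \<gamma> i t \<ge> \<epsilon>)"
      by simp
    show ?case
    proof (cases "\<exists>i'\<le>i. \<exists>t. pm*\<epsilon> \<le> \<gamma> i' t \<and> \<gamma> i' t < \<epsilon> \<and> R i' t")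
      case True then show ?thesis using le_SucI by blast
    next
      case False
      then obtain t where t: "R i t" "\<gamma> i t \<ge> \<epsilon>" using IH by blast
      obtain x where x: "R (Suc i) x" "\<gamma> (Suc i) x \<ge> pm * \<gamma> i t" using step[OF _ t(1)] Suc.prems by auto
      have "pm * \<gamma> i t \<ge> pm * \<epsilon>" using t(2) pm by auto
      then show ?thesis using x by (cases "\<gamma> (Suc i) x < \<epsilon>") auto
    qed
  qed
  have "\<not> (\<exists>t. R (length v) t \<and> \<gamma> (length v) t \<ge> \<epsilon>)"
  proof
    assume "\<exists>t. R (length v) t \<and> \<gamma> (length v) t \<ge> \<epsilon>"
    then obtain t where t: "R (length v) t" "\<gamma> (length v) t \<ge> \<epsilon>" by blast
    then have tq: "t = q" unfolding R_def by (auto simp: mat_id_def split: if_splits)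
    have "\<gamma> (length v) q = (\<Sum>s\<in>C. Pz s * W v s q)" unfolding \<gamma>_def by simp
    also have "\<dots> \<le> (\<Sum>s\<in>C. W v s q)"
      using Pzle by (intro sum_mono) (auto intro!: mult_left_le_one_le simp: W_nonneg Pznn)
    also have "\<dots> \<le> L" unfolding L_def
      by (intro sum_mono member_le_sum) (use qC in \<open>auto simp: W_nonneg\<close>)
    finally have "\<gamma> (length v) q \<le> pm * \<epsilon> / 2" using ell L_def by simp
    moreover have "pm * \<epsilon> / 2 < \<epsilon>" using pm eps by (simp add: field_simps)
    ultimately show False using t tq by simp
  qed
  then obtain i t where it: "i \<le> length v" "pm*\<epsilon> \<le> \<gamma> i t" "\<gamma> i t < \<epsilon>"
    using claim[of "length v"] by auto
  define g where "g = (\<Sum>d\<in>-C. W (drop i v) t d)"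
  define h where "h = (\<Sum>d\<in>C. W (drop i v) t d)"
  have gh: "g + h = 1" using W_rowsum[of "drop i v" t] split_sum[of "\<lambda>d. W (drop i v) t d" C]
    unfolding g_def h_def by simp
  have gnn: "g \<ge> 0" unfolding g_def by (auto intro!: sum_nonneg simp: W_nonneg)
  have hnn: "h \<ge> 0" unfolding h_def by (auto intro!: sum_nonneg simp: W_nonneg)
  have "\<gamma> i t * g \<le> (\<Sum>t\<in>UNIV. \<gamma> i t * (\<Sum>d\<in>-C. W (drop i v) t d))"
    unfolding g_def by (rule member_le_sum[where f="\<lambda>t. \<gamma> i t * (\<Sum>d\<in>-C. W (drop i v) t d)"])
      (auto intro!: mult_nonneg_nonneg sum_nonneg simp: \<gamma>nn W_nonneg)
  also have "\<dots> = (\<Sum>s\<in>C. Pz s * (\<Sum>d\<in>-C. W v s d))" unfolding \<gamma>_def by (rule triple_sum)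
  also have "\<dots> \<le> L" unfolding L_def
    using Pzle by (intro sum_mono) (auto intro!: mult_left_le_one_le sum_nonneg simp: W_nonneg Pznn)
  finally have "\<gamma> i t * g \<le> pm * \<epsilon> / 2" using ell L_def by simp
  then have "\<gamma> i t * g \<le> \<gamma> i t * (1/2)" using it(2) by simp
  then have g2: "g \<le> 1/2" using it(2) pm eps
    by (metis mult_le_cancel_left_pos mult_pos_pos order_less_le_trans)
  have "\<delta> i t * h \<le> (\<Sum>t\<in>UNIV. \<delta> i t * (\<Sum>d\<in>C. W (drop i v) t d))"
    unfolding h_def by (rule member_le_sum[where f="\<lambda>t. \<delta> i t * (\<Sum>d\<in>C. W (drop i v) t d)"])
      (auto intro!: mult_nonneg_nonneg sum_nonneg simp: \<delta>nn W_nonneg)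
  also have "\<dots> = \<iota>" unfolding \<delta>_def \<iota>_def by (rule triple_sum)
  finally have dh: "\<delta> i t * h \<le> \<iota>" .
  have "\<delta> i t * (1/2) \<le> \<delta> i t * h" using gh g2 \<delta>nn by (intro mult_left_mono) auto
  then have d2: "\<delta> i t \<le> 2 * \<iota>" using dh by simp
  have tot: "(\<Sum>s\<in>UNIV. Pz s * W (take i v) s t) = \<gamma> i t + \<delta> i t"
    unfolding \<gamma>_def \<delta>_def by (rule split_sum)
  have "\<delta> i t \<ge> 0" by (rule \<delta>nn)
  then show ?thesis using it tot d2 unfolding \<iota>_def by (intro exI[of _ i] conjI exI[of _ t]) auto
qed

end

lemma class_facts:
  fixes M :: "'q::finite mat"
  assumes Mnn: "\<forall>s t. M s t \<ge> 0" and Mrow: "\<forall>s. (\<Sum>t\<in>UNIV. M s t) = 1"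
    and idem: "idempotent_mat M" and rec: "recurrent M r"
  shows "M r r > 0" "\<forall>c. M r c > 0 \<longrightarrow> M c r > 0"
        "\<forall>c d. M r c > 0 \<longrightarrow> M r d = 0 \<longrightarrow> M c d = 0"
proof -
  have tr: "M s t > 0" if "M s x > 0" "M x t > 0" for s x t
  proof -
    have "M s x * M x t \<le> (\<Sum>y\<in>UNIV. M s y * M y t)"
      by (rule member_le_sum[where f="\<lambda>y. M s y * M y t"]) (auto simp: Mnn)
    moreover have "M s x * M x t > 0" using that by simp
    ultimately have "mat_mult M M s t > 0" by (simp add: mat_mult_def)
    then show ?thesis using idem unfolding idempotent_mat_def by blast
  qed
  have reach: "s = t \<or> M s t > 0" if "(s,t) \<in> mc_reach M" for s t
    using that unfolding mc_reach_def
  proof (induction rule: rtrancl_induct)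
    case base then show ?case by simp
  next
    case (step y z) then show ?case using tr by auto
  qed
  have inr: "(s,t) \<in> mc_reach M" if "M s t > 0" for s t
    using that unfolding mc_reach_def by auto
  have bk: "c = r \<or> M c r > 0" if "M r c > 0" for c
    using rec inr[OF that] reach unfolding recurrent_def by blast
  obtain t where t: "M r t > 0"
  proof -
    have "\<exists>t. M r t > 0"
    proof (rule ccontr)
      assume "\<not> ?thesis"
      then have "\<forall>t. M r t = 0" using Mnn by (metis less_eq_real_def)
      then have "(\<Sum>t\<in>UNIV. M r t) = 0" by simp
      then show False using Mrow by simp
    qed
    then show ?thesis using that by blast
  qed
  show rr: "M r r > 0" using bk[OF t] t tr by auto
  show "\<forall>c. M r c > 0 \<longrightarrow> M c r > 0" using bk rr by auto
  show "\<forall>c d. M r c > 0 \<longrightarrow> M r d = 0 \<longrightarrow> M c d = 0"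
    using tr Mnn by (metis less_eq_real_def less_irrefl)
qed

definition cc :: "(nat \<Rightarrow> 'a list) \<Rightarrow> nat \<Rightarrow> 'a list" where
  "cc U m = concat (map U [0..<m])"

definition wd :: "(nat \<Rightarrow> 'a list) \<Rightarrow> nat \<Rightarrow> 'a" where
  "wd U k = cc U (Suc k) ! k"

lemma cc_Suc: "cc U (Suc m) = cc U m @ U m"
  by (simp add: cc_def)

lemma cc_0: "cc U 0 = []" by (simp add: cc_def)

lemma len_cc: assumes "\<forall>j. U j \<noteq> []" shows "length (cc U m) \<ge> m"
proof (induction m)
  case 0 then show ?case by simp
next
  case (Suc m)
  have "length (U m) \<ge> 1" using assms by (cases "U m") auto
  then show ?case using Suc by (simp add: cc_Suc)
qed

lemma cc_mono: "m' \<le> m \<Longrightarrow> \<exists>xs. cc U m = cc U m' @ xs"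
proof (induction m rule: dec_induct)
  case base then show ?case by simp
next
  case (step m) then show ?case by (auto simp: cc_Suc)
qed

lemma cc_nth: assumes "m' \<le> m" "i < length (cc U m')" shows "cc U m ! i = cc U m' ! i"
proof -
  obtain xs where "cc U m = cc U m' @ xs" using cc_mono[OF assms(1)] by blast
  then show ?thesis using assms(2) by (simp add: nth_append)
qed

lemma prefix_cc:
  assumes ne: "\<forall>j. U j \<noteq> []" and k: "k \<le> length (cc U m)"
  shows "prefix_word (wd U) k = take k (cc U m)"
proof (rule nth_equalityI)
  show "length (prefix_word (wd U) k) = length (take k (cc U m))"
    using k by (simp add: prefix_word_def)
next
  fix i assume "i < length (prefix_word (wd U) k)"
  then have ik: "i < k" by (simp add: prefix_word_def)
  define N where "N = max m (Suc i)"
  have l1: "i < length (cc U (Suc i))" using len_cc[OF ne, of "Suc i"] by simp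
  have "cc U N ! i = cc U (Suc i) ! i" by (rule cc_nth) (use l1 N_def in auto)
  moreover have "cc U N ! i = cc U m ! i" by (rule cc_nth) (use ik k N_def in auto)
  ultimately show "prefix_word (wd U) k ! i = take k (cc U m) ! i"
    using ik by (simp add: prefix_word_def wd_def)
qed

lemma prefix_block:
  assumes ne: "\<forall>j. U j \<noteq> []" and i: "i \<le> length (U j)"
  shows "prefix_word (wd U) (length (cc U j) + i) = cc U j @ take i (U j)"
proof -
  have "length (cc U j) + i \<le> length (cc U (Suc j))" using i by (simp add: cc_Suc)
  then have "prefix_word (wd U) (length (cc U j) + i) = take (length (cc U j) + i) (cc U (Suc j))"
    by (rule prefix_cc[OF ne])
  then show ?thesis by (simp add: cc_Suc)
qed


lemma geom_sum: "(\<Sum>i<j. (1/2::real)^(i+2)) = 1/2 - (1/2)^(j+1)"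
  by (induction j) (auto simp: field_simps)

theorem theorem5p9:
  fixes Delta :: "'q::finite \<Rightarrow> 'a::finite \<Rightarrow> 'q pmf"
  assumes "simple_pa Delta"
  shows "leaktight Delta"
  unfolding leaktight_def
proof
  assume "\<exists>u. is_leak Delta u"
  then obtain u where "is_leak Delta u" by blast
  then obtain M r q where conv: "\<forall>s t. (\<lambda>n. word_mat Delta (u n) s t) \<longlonglongrightarrow> M s t"
    and idem: "idempotent_mat M" and recr: "recurrent M r"
    and limrq: "(\<lambda>n. word_mat Delta (u n) r q) \<longlonglongrightarrow> 0"
    and posrq: "\<forall>n. word_mat Delta (u n) r q > 0"
    unfolding is_leak_def by blast
  let ?W = "word_mat Delta"
  have Mnn: "\<forall>s t. M s t \<ge> 0"
  proof (intro allI)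
    fix s t show "M s t \<ge> 0"
      by (rule LIMSEQ_le_const[OF conv[rule_format, of s t]]) (auto simp: W_nonneg)
  qed
  have Mrow: "\<forall>s. (\<Sum>t\<in>UNIV. M s t) = 1"
  proof
    fix s
    have "(\<lambda>n. \<Sum>t\<in>UNIV. ?W (u n) s t) \<longlonglongrightarrow> (\<Sum>t\<in>UNIV. M s t)"
      using conv by (intro tendsto_sum) auto
    then have "(\<lambda>n. 1::real) \<longlonglongrightarrow> (\<Sum>t\<in>UNIV. M s t)" by (simp add: W_rowsum)
    then show "(\<Sum>t\<in>UNIV. M s t) = 1" using LIMSEQ_unique tendsto_const by blast
  qed
  have Mrq: "M r q = 0" using conv limrq LIMSEQ_unique by blast
  define C where "C = {c. M r c > 0}"
  note cf = class_facts[OF Mnn Mrow idem recr]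
  have rC: "r \<in> C" using cf(1) C_def by simp
  have qC: "q \<notin> C" using Mrq C_def by simp
  have crC: "\<forall>c\<in>C. M c r > 0" using cf(2) C_def by simp
  have closed: "\<forall>c\<in>C. \<forall>d\<in>-C. M c d = 0"
  proof (intro ballI)
    fix c d assume "c \<in> C" "d \<in> -C"
    then have "M r c > 0" "\<not> M r d > 0" unfolding C_def by auto
    moreover then have "M r d = 0" using Mnn[rule_format, of r d] by linarith
    ultimately show "M c d = 0" using cf(3) by blast
  qed
  define lk where "lk n = (\<Sum>c\<in>C. \<Sum>d\<in>-C. ?W (u n) c d)" for n
  have lklim: "lk \<longlonglongrightarrow> 0"
  proof -
    have "lk \<longlonglongrightarrow> (\<Sum>c\<in>C. \<Sum>d\<in>-C. M c d)"
      unfolding lk_def using conv by (intro tendsto_sum) auto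
    moreover have "(\<Sum>c\<in>C. \<Sum>d\<in>-C. M c d) = 0"
      using closed by (intro sum.neutral ballI) simp
    ultimately show ?thesis by simp
  qed
  have lknn: "lk n \<ge> 0" for n unfolding lk_def by (auto intro!: sum_nonneg simp: W_nonneg)
  define \<mu> where "\<mu> = Min ((\<lambda>c. M c r) ` C)"
  have \<mu>pos: "\<mu> > 0"
  proof -
    have f: "finite ((\<lambda>c. M c r) ` C)" by simp
    have n: "(\<lambda>c. M c r) ` C \<noteq> {}" using rC by blast
    show ?thesis unfolding \<mu>_def using Min_gr_iff[OF f n] crC by blast
  qed
  have \<mu>le: "\<forall>c\<in>C. \<mu> \<le> M c r" unfolding \<mu>_def by auto
  have ev\<mu>: "eventually (\<lambda>n. \<forall>c\<in>C. ?W (u n) c r > \<mu>/2) sequentially"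
  proof (rule eventually_ball_finite)
    show "finite C" by simp
    show "\<forall>c\<in>C. eventually (\<lambda>n. ?W (u n) c r > \<mu>/2) sequentially"
    proof
      fix c assume "c \<in> C"
      then have "\<mu>/2 < M c r" using \<mu>le \<mu>pos by fastforce
      then show "eventually (\<lambda>n. ?W (u n) c r > \<mu>/2) sequentially"
        using conv order_tendstoD(1) by blast
    qed
  qed
  define \<theta> where "\<theta> j = (1/2::real)^(j+2)" for j
  have \<theta>pos: "\<theta> j > 0" for j unfolding \<theta>_def by simp
  have \<theta>lim: "\<theta> \<longlonglongrightarrow> 0" unfolding \<theta>_def by (intro LIMSEQ_power_zero[THEN LIMSEQ_ignore_initial_segment]) auto
  have exn: "\<exists>n. lk n \<le> \<theta> j \<and> (\<forall>c\<in>C. ?W (u n) c r \<ge> \<mu>/2)" for j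
  proof -
    have "eventually (\<lambda>n. lk n < \<theta> j) sequentially" using lklim \<theta>pos order_tendstoD(2) by blast
    then have "eventually (\<lambda>n. lk n < \<theta> j \<and> (\<forall>c\<in>C. ?W (u n) c r > \<mu>/2)) sequentially"
      using ev\<mu> by (rule eventually_conj)
    then obtain N where "\<forall>n\<ge>N. lk n < \<theta> j \<and> (\<forall>c\<in>C. ?W (u n) c r > \<mu>/2)"
      unfolding eventually_sequentially by blast
    then have "lk N < \<theta> j \<and> (\<forall>c\<in>C. ?W (u N) c r > \<mu>/2)" by blast
    then obtain n where "lk n < \<theta> j \<and> (\<forall>c\<in>C. ?W (u n) c r > \<mu>/2)" by blast
    then show ?thesis by (intro exI[of _ n]) (auto simp: less_eq_real_def)
  qed
  define nn where "nn j = (SOME n. lk n \<le> \<theta> j \<and> (\<forall>c\<in>C. ?W (u n) c r \<ge> \<mu>/2))" for j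
  have nn: "lk (nn j) \<le> \<theta> j" "\<forall>c\<in>C. ?W (u (nn j)) c r \<ge> \<mu>/2" for j
    using someI_ex[OF exn[of j]] unfolding nn_def by auto
  define U where "U j = u (nn j)" for j
  have ne: "\<forall>j. U j \<noteq> []"
  proof
    fix j
    have "r \<noteq> q" using rC qC by auto
    then show "U j \<noteq> []" using posrq[rule_format, of "nn j"] unfolding U_def
      by (auto simp: mat_id_def)
  qed
  define w where "w = wd U"
  define PB where "PB j s = ?W (cc U j) r s" for j s
  have PBnn: "PB j s \<ge> 0" for j s unfolding PB_def by (rule W_nonneg)
  have PBle: "PB j s \<le> 1" for j s unfolding PB_def by (rule W_le1)
  have PBSuc: "PB (Suc j) t = (\<Sum>s\<in>UNIV. PB j s * ?W (U j) s t)" for j t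
    unfolding PB_def by (simp add: cc_Suc W_append_e)
  have Pblock: "?W (prefix_word w (length (cc U j) + i)) r t = (\<Sum>s\<in>UNIV. PB j s * ?W (take i (U j)) s t)"
    if "i \<le> length (U j)" for i j t
    unfolding w_def PB_def using prefix_block[OF ne that] by (simp add: W_append_e)
  define X where "X j = (\<Sum>s\<in>C. PB j s)" for j
  define \<iota> where "\<iota> j = (\<Sum>s\<in>-C. PB j s * (\<Sum>c\<in>C. ?W (U j) s c))" for j
  define E where "E j = (\<Sum>s\<in>C. PB j s * (\<Sum>d\<in>-C. ?W (U j) s d))" for j
  have rowC: "(\<Sum>c\<in>C. ?W v s c) = 1 - (\<Sum>d\<in>-C. ?W v s d)" for v s
    using W_rowsum[of Delta v s] split_sum[of "\<lambda>t. ?W v s t" C] by simp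
  have Xstep: "X (Suc j) = X j - E j + \<iota> j" for j
  proof -
    have "X (Suc j) = (\<Sum>t\<in>C. \<Sum>s\<in>UNIV. PB j s * ?W (U j) s t)" unfolding X_def PBSuc ..
    also have "\<dots> = (\<Sum>s\<in>UNIV. \<Sum>t\<in>C. PB j s * ?W (U j) s t)" by (rule sum.swap)
    also have "\<dots> = (\<Sum>s\<in>UNIV. PB j s * (\<Sum>t\<in>C. ?W (U j) s t))" by (simp add: sum_distrib_left)
    also have "\<dots> = (\<Sum>s\<in>C. PB j s * (\<Sum>t\<in>C. ?W (U j) s t)) + \<iota> j"
      unfolding \<iota>_def by (rule split_sum)
    also have "(\<Sum>s\<in>C. PB j s * (\<Sum>t\<in>C. ?W (U j) s t)) = X j - E j"
      unfolding X_def E_def rowC by (simp add: right_diff_distrib sum_subtractf)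
    finally show ?thesis .
  qed
  have Enn: "E j \<ge> 0" for j unfolding E_def using PBnn by (auto intro!: sum_nonneg mult_nonneg_nonneg simp: W_nonneg)
  have Ele: "E j \<le> \<theta> j" for j
  proof -
    have "E j \<le> lk (nn j)" unfolding E_def lk_def U_def
      using PBle by (intro sum_mono) (auto intro!: mult_left_le_one_le sum_nonneg simp: W_nonneg PBnn)
    then show ?thesis using nn(1)[of j] by simp
  qed
  have \<iota>nn: "\<iota> j \<ge> 0" for j unfolding \<iota>_def using PBnn by (auto intro!: sum_nonneg mult_nonneg_nonneg simp: W_nonneg)
  have X0: "X 0 = 1"
  proof -
    have "X 0 = (\<Sum>s\<in>C. if s = r then 1 else 0)" unfolding X_def PB_def cc_0
      by (intro sum.cong) (auto simp: mat_id_def)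
    then show ?thesis using rC by simp
  qed
  have Xle: "X j \<le> 1" for j
  proof -
    have "X j \<le> (\<Sum>s\<in>UNIV. PB j s)" unfolding X_def by (rule sum_mono2) (auto simp: PBnn)
    then show ?thesis unfolding PB_def by (simp add: W_rowsum)
  qed
  have Xlow0: "X j \<ge> 1 - (\<Sum>i<j. \<theta> i)" for j
  proof (induction j)
    case 0 then show ?case using X0 by simp
  next
    case (Suc j) then show ?case using Xstep[of j] Ele[of j] \<iota>nn[of j] by simp
  qed
  have Xlow: "X j \<ge> 1/2" for j
  proof -
    have "(1/2::real)^(j+1) \<ge> 0" by simp
    then show ?thesis using Xlow0[of j] geom_sum[of j] unfolding \<theta>_def by linarith
  qed
  define Z where "Z j = X j + (\<Sum>i<j. \<theta> i)" for j
  have Zstep: "Z (Suc j) \<ge> Z j + \<iota> j" for j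
    unfolding Z_def using Xstep[of j] Ele[of j] by simp
  have Zinc: "incseq Z" by (rule incseq_SucI) (use Zstep \<iota>nn in \<open>smt (verit)\<close>)
  have Zbd: "bdd_above (range Z)"
  proof (rule bdd_aboveI)
    fix x assume "x \<in> range Z"
    then obtain j where "x = Z j" by blast
    moreover have "(1/2::real)^(j+1) \<ge> 0" by simp
    ultimately show "x \<le> 2" unfolding Z_def using Xle[of j] geom_sum[of j] unfolding \<theta>_def by linarith
  qed
  have Zlim: "Z \<longlonglongrightarrow> (SUP i. Z i)" by (rule LIMSEQ_incseq_SUP[OF Zbd Zinc])
  have Zdiff: "(\<lambda>j. Z (Suc j) - Z j) \<longlonglongrightarrow> 0"
    using tendsto_diff[OF LIMSEQ_Suc[OF Zlim] Zlim] by simp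
  have \<iota>lim: "\<iota> \<longlonglongrightarrow> 0"
    by (rule tendsto_sandwich[of "\<lambda>_. 0" _ _ "\<lambda>j. Z (Suc j) - Z j"])
      (use \<iota>nn Zstep Zdiff in \<open>auto intro!: always_eventually simp: algebra_simps\<close>)
  have PBr: "PB j r \<ge> \<mu>/4" if "j \<ge> 1" for j
  proof -
    define j' where "j' = j - 1"
    have j: "j = Suc j'" using that by (simp add: j'_def)
    have "(\<Sum>s\<in>C. PB j' s * ?W (U j') s r) \<le> (\<Sum>s\<in>UNIV. PB j' s * ?W (U j') s r)"
      by (rule sum_mono2) (auto intro!: mult_nonneg_nonneg simp: PBnn W_nonneg)
    moreover have "(\<Sum>s\<in>C. PB j' s * (\<mu>/2)) \<le> (\<Sum>s\<in>C. PB j' s * ?W (U j') s r)"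
      using nn(2)[of j'] unfolding U_def by (intro sum_mono mult_left_mono) (auto simp: PBnn)
    moreover have "(\<Sum>s\<in>C. PB j' s * (\<mu>/2)) = X j' * (\<mu>/2)" unfolding X_def by (simp add: sum_distrib_right)
    moreover have "X j' * (\<mu>/2) \<ge> \<mu>/4" using Xlow[of j'] \<mu>pos by (simp add: field_simps)
    ultimately show ?thesis unfolding j PBSuc by linarith
  qed
  obtain pm where pm: "pm > 0" "\<forall>s a t. pmf (Delta s a) t > 0 \<longrightarrow> pmf (Delta s a) t \<ge> pm"
    using pmin_ex by blast
  have pm1: "pm \<le> 1"
  proof -
    have "set_pmf (Delta undefined undefined) \<noteq> {}" by (rule set_pmf_not_empty)
    then obtain t where "t \<in> set_pmf (Delta undefined undefined)" by blast
    then have "pmf (Delta undefined undefined) t > 0" by (simp add: pmf_positive)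
    then have "pm \<le> pmf (Delta undefined undefined) t" using pm(2) by blast
    moreover have "pmf (Delta undefined undefined) t \<le> 1" by (rule pmf_le_1)
    ultimately show ?thesis by linarith
  qed
  have "simple_process Delta w r" using assms unfolding simple_pa_def by blast
  then obtain lam :: real and A B :: "nat \<Rightarrow> 'q set" where lam: "lam > 0"
    and part: "\<forall>k. A k \<inter> B k = {} \<and> A k \<union> B k = UNIV"
    and lowA: "\<forall>k. \<forall>x\<in>A k. ?W (prefix_word w k) r x \<ge> lam"
    and Blim: "(\<lambda>n. \<Sum>t\<in>B n. ?W (prefix_word w n) r t) \<longlonglongrightarrow> 0"
    unfolding simple_process_def by blast
  define lam' where "lam' = min lam (\<mu>/2)"
  define \<epsilon> where "\<epsilon> = lam' / 2"
  have epos: "\<epsilon> > 0" unfolding \<epsilon>_def lam'_def using lam \<mu>pos by simp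
  have ele: "\<epsilon> \<le> \<mu>/4" unfolding \<epsilon>_def lam'_def by simp
  have pe: "pm * \<epsilon> > 0" using pm epos by simp
  have ev1: "eventually (\<lambda>n. (\<Sum>t\<in>B n. ?W (prefix_word w n) r t) < pm * \<epsilon>) sequentially"
    using Blim pe order_tendstoD(2) by blast
  then obtain K where K: "\<forall>n\<ge>K. (\<Sum>t\<in>B n. ?W (prefix_word w n) r t) < pm * \<epsilon>"
    unfolding eventually_sequentially by blast
  have ev2: "eventually (\<lambda>j. \<theta> j < pm * \<epsilon> / 2) sequentially"
    using \<theta>lim pe order_tendstoD(2)[of \<theta> 0 sequentially "pm * \<epsilon> / 2"] by simp
  have ev3: "eventually (\<lambda>j. \<iota> j < \<epsilon> / 2) sequentially"
    using \<iota>lim epos order_tendstoD(2)[of \<iota> 0 sequentially "\<epsilon> / 2"] by simp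
  have "eventually (\<lambda>j. j \<ge> max K 1 \<and> \<theta> j < pm * \<epsilon> / 2 \<and> \<iota> j < \<epsilon> / 2) sequentially"
    using eventually_conj[OF eventually_ge_at_top[of "max K 1"] eventually_conj[OF ev2 ev3]] by simp
  then obtain j where j: "j \<ge> K" "j \<ge> 1" "\<theta> j < pm * \<epsilon> / 2" "\<iota> j < \<epsilon> / 2"
    unfolding eventually_sequentially by auto
  have ell: "(\<Sum>s\<in>C. \<Sum>d\<in>-C. ?W (U j) s d) \<le> pm * \<epsilon> / 2"
    using nn(1)[of j] j(3) unfolding lk_def U_def by simp
  have Pzr: "PB j r \<ge> \<epsilon>" using PBr[OF j(2)] ele by simp
  have posj: "?W (U j) r q > 0" unfolding U_def using posrq by blast
  obtain i t where it: "i \<le> length (U j)"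
    "pm * \<epsilon> \<le> (\<Sum>s\<in>UNIV. PB j s * ?W (take i (U j)) s t)"
    "(\<Sum>s\<in>UNIV. PB j s * ?W (take i (U j)) s t) < \<epsilon> + 2 * (\<Sum>s\<in>-C. PB j s * (\<Sum>c\<in>C. ?W (U j) s c))"
    using crossing[where Delta=Delta and Pz="PB j" and C=C and r=r and q=q and v="U j" and pm=pm and \<epsilon>=\<epsilon>] PBnn PBle rC qC posj pm pm1 epos Pzr ell
    by blast
  define k where "k = length (cc U j) + i"
  have Pk: "?W (prefix_word w k) r t = (\<Sum>s\<in>UNIV. PB j s * ?W (take i (U j)) s t)"
    unfolding k_def by (rule Pblock[OF it(1)])
  have io: "(\<Sum>s\<in>-C. PB j s * (\<Sum>c\<in>C. ?W (U j) s c)) = \<iota> j" by (simp add: \<iota>_def)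
  have el: "2 * \<epsilon> \<le> lam" unfolding \<epsilon>_def lam'_def by simp
  have "?W (prefix_word w k) r t < lam"
    using Pk it(3) j(4) io el by linarith
  then have "t \<notin> A k" using lowA by force
  then have tB: "t \<in> B k" using part by blast
  have "?W (prefix_word w k) r t \<le> (\<Sum>t\<in>B k. ?W (prefix_word w k) r t)"
    by (rule member_le_sum[OF tB]) (auto simp: W_nonneg)
  moreover have "k \<ge> K" unfolding k_def using len_cc[OF ne, of j] j(1) by simp
  ultimately show False using K Pk it(2) by fastforce
qed

end
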